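(* Let $i\geq1$ and let $m$ be an integer with $5\nmid m$ such that $m=N_i(f)$ for some $f\in\mathbb Z[x]$. Then $m=N_i(1+(x-1)^3h(x))$ for some $h\in\mathbb Z[x]$. For $i=1$, moreover, given such $h$, there is $g\in\mathbb Z[x]$ with $5m=N_1(1-x+5g(x))$, and $5\nmid g(1)$ if $5\nmid h(1)$.
   Context: For $k\geq1$, $\omega_k=e^{2\pi i/5^k}$ and $N_k(F)=\prod_{1\leq j\leq 5^k,\ 5\nmid j}F(\omega_k^j)$. *)

theory Defs
  imports "HOL-Analysis.Analysis" "HOL-Computational_Algebra.Polynomial"
begin

definition omega5 :: "nat \<Rightarrow> complex" where
  "omega5 k = cis (2 * pi / real (5 ^ k))"

definition Nk :: "nat \<Rightarrow> int poly \<Rightarrow> complex" where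
  "Nk k F = (\<Prod>j \<in> {j \<in> {1..5 ^ k}. \<not> (5::nat) dvd j}.
               poly (map_poly of_int F) (omega5 k ^ j))"

end

theory Submission
  imports Defs
begin


definition ev :: "complex \<Rightarrow> int poly \<Rightarrow> complex" where
  "ev z p = poly (map_poly of_int p) z"

lemma ev_pCons[simp]: "ev z (pCons a p) = of_int a + z * ev z p"
  unfolding ev_def by (simp add: map_poly_pCons)

lemma ev_0[simp]: "ev z 0 = 0" unfolding ev_def by simp

lemma ev_const[simp]: "ev z [:a:] = of_int a" by simp

lemma ev_1[simp]: "ev z 1 = 1" unfolding ev_def by simp

lemma ev_add[simp]: "ev z (p + q) = ev z p + ev z q"
proof -
  have "map_poly (of_int::int\<Rightarrow>complex) (p + q) = map_poly of_int p + map_poly of_int q"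
    by (rule poly_eqI) (simp add: coeff_map_poly)
  thus ?thesis unfolding ev_def by simp
qed

lemma ev_uminus[simp]: "ev z (- p) = - ev z p"
  by (induction p) (simp_all add: algebra_simps)

lemma ev_diff[simp]: "ev z (p - q) = ev z p - ev z q"
  using ev_add[of z p "-q"] by simp

lemma ev_smult[simp]: "ev z (smult c p) = of_int c * ev z p"
  by (induction p) (simp_all add: algebra_simps)

lemma ev_mult[simp]: "ev z (p * q) = ev z p * ev z q"
  by (induction p) (simp_all add: algebra_simps)

lemma ev_power[simp]: "ev z (p ^ n) = ev z p ^ n"
  by (induction n) simp_all

lemma ev_prod: "ev z (prod f A) = (\<Prod>a\<in>A. ev z (f a))"
  by (induction A rule: infinite_finite_induct) simp_all

lemma ev_of_int[simp]: "ev z (of_int k) = of_int k"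
  by (simp add: of_int_poly)

lemma ev_numeral[simp]: "ev z (numeral k) = numeral k"
  using ev_of_int[of z "numeral k"] by simp

lemma ev_X[simp]: "ev z [:0,1:] = z" by simp

lemma ev_pcompose[simp]: "ev z (pcompose p q) = ev (ev z q) p"
  by (induction p) (simp_all add: pcompose_pCons)

lemma ev_real: "ev 1 p = of_int (poly p 1)"
  by (induction p) simp_all

lemma ev_complex: "ev (of_int 1) p = of_int (poly p 1)"
  by (induction p) simp_all

lemma Nk_ev: "Nk k F = (\<Prod>j \<in> {j \<in> {1..5 ^ k}. \<not> (5::nat) dvd j}. ev (omega5 k ^ j) F)"
  unfolding Nk_def ev_def ..



lemma omega_pow: "omega5 k ^ n = cis (2 * pi * real n / real (5 ^ k))"
  apply (simp only: omega5_def Complex.DeMoivre)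
  by (simp add: field_simps)

lemma omega_pow_eq_1: "omega5 k ^ n = 1 \<longleftrightarrow> 5 ^ k dvd n"
proof
  assume "5 ^ k dvd n"
  then obtain q where q: "n = 5 ^ k * q" by auto
  have "omega5 k ^ n = cis (2 * pi * real q)"
    unfolding omega_pow q by (simp add: field_simps)
  also have "\<dots> = 1" by (rule cis_multiple_2pi) (rule Ints_of_nat)
  finally show "omega5 k ^ n = 1" .
next
  assume "omega5 k ^ n = 1"
  hence "cis (2 * pi * real n / real (5 ^ k)) = 1" by (simp add: omega_pow)
  hence "cos (2 * pi * real n / real (5 ^ k)) = 1"
    by (metis Re_complex_of_real cis.sel(1) of_real_1)
  then obtain z :: int where z: "2 * pi * real n / real (5 ^ k) = z * 2 * pi"
    by (auto simp: cos_one_2pi_int)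
  hence "real n = real_of_int z * real (5 ^ k)"
    by (simp add: field_simps)
  hence "int n = z * int (5 ^ k)"
    by (metis of_int_eq_iff of_int_mult of_int_of_nat_eq)
  hence "int (5 ^ k) dvd int n" by simp
  thus "5 ^ k dvd n" using int_dvd_int_iff by blast
qed

lemma omega_nz[simp]: "omega5 k \<noteq> 0"
  unfolding omega5_def by simp

lemma omega_pow_mod: "omega5 k ^ n = omega5 k ^ (n mod 5 ^ k)"
proof -
  have "omega5 k ^ n = omega5 k ^ (5 ^ k * (n div 5 ^ k) + n mod 5 ^ k)" by simp
  also have "\<dots> = (omega5 k ^ (5 ^ k)) ^ (n div 5 ^ k) * omega5 k ^ (n mod 5 ^ k)"
    by (metis power_add power_mult)
  also have "omega5 k ^ (5 ^ k) = 1" by (simp add: omega_pow_eq_1)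
  finally show ?thesis by simp
qed

lemma omega_inj_aux:
  assumes "a \<le> b" "a \<in> {1..5^k}" "b \<in> {1..5^k}" "omega5 k ^ a = omega5 k ^ b"
  shows "a = b"
proof -
  have "omega5 k ^ b = omega5 k ^ a * omega5 k ^ (b - a)"
    using assms(1) by (simp add: power_add[symmetric])
  with assms(4) have "omega5 k ^ (b - a) = 1" by simp
  hence "5 ^ k dvd (b - a)" by (simp add: omega_pow_eq_1)
  moreover have "b - a < 5 ^ k" using assms by auto
  ultimately have "b - a = 0" by (metis dvd_imp_le neq0_conv not_le)
  thus ?thesis using assms(1) by simp
qed

lemma omega_inj: "inj_on (\<lambda>j. omega5 k ^ j) {1..5^k}"
  by (rule inj_onI) (metis nle_le omega_inj_aux)



definition J :: "nat \<Rightarrow> nat set" where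
  "J k = {j \<in> {1..5 ^ k}. \<not> (5::nat) dvd j}"

lemma finite_J[simp]: "finite (J k)" unfolding J_def by simp

lemma Nk_J: "Nk k F = (\<Prod>j \<in> J k. ev (omega5 k ^ j) F)"
  unfolding Nk_ev J_def ..

lemma prime5: "prime (5::nat)" by simp

lemma J_inj_aux:
  assumes k: "k \<ge> 1" and a: "\<not> 5 dvd a" and j: "j1 \<le> j2" "j1 \<in> J k" "j2 \<in> J k"
    and eq: "(a * j1) mod 5 ^ k = (a * j2) mod 5 ^ k"
  shows "j1 = j2"
proof -
  have "5 ^ k dvd a * j2 - a * j1"
    using eq j(1) by (metis mod_eq_dvd_iff_nat mult_le_mono2)
  hence "5 ^ k dvd (j2 - j1) * a" by (simp add: diff_mult_distrib2 mult.commute)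
  moreover have "coprime ((5::nat) ^ k) a"
    using prime_imp_power_coprime[OF prime5 a] by (simp add: coprime_commute)
  ultimately have "5 ^ k dvd j2 - j1" by (simp add: coprime_dvd_mult_left_iff)
  moreover have "j2 - j1 < 5 ^ k" using j unfolding J_def by auto
  ultimately have "j2 - j1 = 0" by (metis dvd_imp_le neq0_conv not_le)
  thus ?thesis using j(1) by simp
qed

lemma J_perm:
  assumes k: "k \<ge> 1" and a: "\<not> 5 dvd a"
  shows "(\<Prod>j\<in>J k. g (omega5 k ^ (a * j))) = (\<Prod>j\<in>J k. g (omega5 k ^ j))"
proof -
  define \<pi> where "\<pi> j = (a * j) mod 5 ^ k" for j
  have into: "\<pi> j \<in> J k" if "j \<in> J k" for j
  proof -
    have nj: "\<not> 5 dvd j" using that unfolding J_def by auto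
    have naj: "\<not> 5 dvd a * j" using a nj prime_dvd_mult_iff[OF prime5] by blast
    have d5: "(5::nat) dvd 5 ^ k" using k by (simp add: dvd_power)
    have "\<not> 5 dvd \<pi> j"
    proof
      assume "5 dvd \<pi> j"
      moreover have "a * j = 5 ^ k * (a * j div 5 ^ k) + \<pi> j" unfolding \<pi>_def by simp
      ultimately have "5 dvd a * j" using d5 by (metis dvd_add dvd_mult2)
      thus False using naj by simp
    qed
    moreover have "\<pi> j < 5 ^ k" unfolding \<pi>_def by simp
    moreover have "\<pi> j \<noteq> 0" using \<open>\<not> 5 dvd \<pi> j\<close> by (metis dvd_0_right)
    ultimately show ?thesis unfolding J_def by auto
  qed
  have inj: "inj_on \<pi> (J k)"
    by (rule inj_onI) (metis J_inj_aux[OF k a] \<pi>_def nle_le)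
  have img: "\<pi> ` J k = J k"
    by (rule endo_inj_surj) (use into inj in auto)
  have "(\<Prod>j\<in>J k. g (omega5 k ^ j)) = (\<Prod>j\<in>\<pi> ` J k. g (omega5 k ^ j))"
    using img by simp
  also have "\<dots> = (\<Prod>j\<in>J k. g (omega5 k ^ \<pi> j))"
    using inj by (simp add: prod.reindex)
  also have "\<dots> = (\<Prod>j\<in>J k. g (omega5 k ^ (a * j)))"
    unfolding \<pi>_def by (simp add: omega_pow_mod[symmetric])
  finally show ?thesis ..
qed

lemma omega_J_ne1: "k \<ge> 1 \<Longrightarrow> j \<in> J k \<Longrightarrow> omega5 k ^ j \<noteq> 1"
proof
  assume "k \<ge> 1" "j \<in> J k" "omega5 k ^ j = 1"
  hence "5 ^ k dvd j" by (simp add: omega_pow_eq_1)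
  moreover have "(5::nat) dvd 5 ^ k" using \<open>k \<ge> 1\<close> by (simp add: dvd_power)
  ultimately have "5 dvd j" by (rule dvd_trans[rotated])
  thus False using \<open>j \<in> J k\<close> unfolding J_def by auto
qed



lemma Nk_mult: "Nk k (P * Q) = Nk k P * Nk k Q"
  unfolding Nk_J by (simp add: prod.distrib)

lemma Nk_power: "Nk k (P ^ n) = Nk k P ^ n"
  by (induction n) (simp_all add: Nk_mult, simp add: Nk_J)

lemma Nk_X: assumes "k \<ge> 1" shows "Nk k [:0,1:] = 1"
proof -
  define P where "P = (\<Prod>j\<in>J k. omega5 k ^ j)"
  have "P = (\<Prod>j\<in>J k. omega5 k ^ (2 * j))"
    unfolding P_def using J_perm[OF assms, of 2 "\<lambda>x. x"] by simp
  also have "\<dots> = P ^ 2" unfolding P_def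
    by (simp add: power_mult prod_power_distrib[symmetric] mult.commute)
  finally have "P * (P - 1) = 0" by (simp add: power2_eq_square algebra_simps)
  moreover have "P \<noteq> 0" unfolding P_def by simp
  ultimately have "P = 1" by simp
  thus ?thesis unfolding Nk_J P_def by simp
qed

lemma Nk_1X: assumes "k \<ge> 1" shows "Nk k [:1,1:] = 1"
proof -
  define Q where "Q = (\<Prod>j\<in>J k. 1 - omega5 k ^ j)"
  define P where "P = (\<Prod>j\<in>J k. 1 + omega5 k ^ j)"
  have "Q = (\<Prod>j\<in>J k. 1 - omega5 k ^ (2 * j))"
    unfolding Q_def using J_perm[OF assms, of 2 "\<lambda>x. 1 - x"] by simp
  also have "\<dots> = (\<Prod>j\<in>J k. (1 - omega5 k ^ j) * (1 + omega5 k ^ j))"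
    by (rule prod.cong) (simp_all add: power_mult algebra_simps power2_eq_square mult.commute)
  also have "\<dots> = Q * P" unfolding Q_def P_def by (simp add: prod.distrib)
  finally have "Q * (P - 1) = 0" by (simp add: algebra_simps)
  moreover have "Q \<noteq> 0" unfolding Q_def using omega_J_ne1[OF assms] by simp
  ultimately have "P = 1" by simp
  thus ?thesis unfolding Nk_J P_def by simp
qed

definition Phi :: "nat \<Rightarrow> int poly" where
  "Phi k = pcompose [:1,1,1,1,1:] ([:0,1:] ^ (5 ^ (k - 1)))"

lemma Phi_alt: "Phi k = (let y = [:0,1:] ^ (5 ^ (k - 1)) in 1 + y + y^2 + y^3 + y^4)"
  unfolding Phi_def Let_def by (simp add: pcompose_pCons algebra_simps power2_eq_square power3_eq_cube numeral_eq_Suc)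

lemma ev_Phi: "ev z (Phi k) = (let y = z ^ (5 ^ (k - 1)) in 1 + y + y^2 + y^3 + y^4)"
  unfolding Phi_alt Let_def by simp

lemma ev_Phi_root:
  assumes k: "k \<ge> 1" and j: "j \<in> J k"
  shows "ev (omega5 k ^ j) (Phi k) = 0"
proof -
  define y where "y = (omega5 k ^ j) ^ (5 ^ (k - 1))"
  have k5: "(5::nat) ^ k = 5 ^ (k - 1) * 5" using k by (metis Suc_diff_le diff_Suc_1 power_Suc2)
  have "y ^ 5 = omega5 k ^ (j * 5 ^ k)" unfolding y_def k5 by (simp add: power_mult[symmetric] mult.assoc)
  also have "\<dots> = 1" by (simp add: omega_pow_eq_1)
  finally have y5: "y ^ 5 = 1" .
  have "y \<noteq> 1"
  proof
    assume "y = 1"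
    hence "5 ^ k dvd j * 5 ^ (k - 1)" unfolding y_def by (simp add: power_mult[symmetric] omega_pow_eq_1)
    hence "5 ^ (k - 1) * 5 dvd 5 ^ (k - 1) * j" unfolding k5 by (simp add: mult.commute)
    hence "5 dvd j" by (simp add: nat_mult_dvd_cancel_disj)
    thus False using j unfolding J_def by auto
  qed
  have "(y - 1) * (1 + y + y^2 + y^3 + y^4) = y ^ 5 - 1"
    by (simp add: algebra_simps numeral_eq_Suc)
  with y5 \<open>y \<noteq> 1\<close> have "1 + y + y^2 + y^3 + y^4 = 0" by simp
  thus ?thesis unfolding ev_Phi y_def Let_def by simp
qed

lemma ev1_Phi: "ev 1 (Phi k) = 5"
  unfolding ev_Phi by simp

lemma poly1_Phi: "poly (Phi k) 1 = 5"
  unfolding Phi_alt Let_def by simp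

lemma degree_Phi: "degree (Phi k) = 4 * 5 ^ (k - 1)"
  unfolding Phi_def by (simp add: degree_pcompose degree_linear_power[of 0, simplified])

lemma coeff_Xpow: "coeff ([:0,1::int:] ^ n) n = 1"
  by (induction n) simp_all

lemma lead_coeff_Phi: "lead_coeff (Phi k) = 1"
  unfolding Phi_def
  by (subst lead_coeff_comp) (simp_all add: degree_linear_power[of 0, simplified] coeff_Xpow)

lemma card_J: assumes k: "k \<ge> 1" shows "card (J k) = 4 * 5 ^ (k - 1)"
proof -
  define M where "M = {j \<in> {1..5 ^ k}. (5::nat) dvd j}"
  have k5: "(5::nat) ^ k = 5 * 5 ^ (k - 1)" using k by (metis Suc_diff_le diff_Suc_1 power_Suc)
  have "M = (\<lambda>q. 5 * q) ` {1..5 ^ (k - 1)}"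
  proof
    show "M \<subseteq> (\<lambda>q. 5 * q) ` {1..5 ^ (k - 1)}"
    proof
      fix x assume "x \<in> M"
      then obtain q where q: "x = 5 * q" and "1 \<le> x" "x \<le> 5 * 5 ^ (k - 1)" unfolding M_def k5 by auto
      hence "q \<in> {1..5 ^ (k - 1)}" by auto
      thus "x \<in> (\<lambda>q. 5 * q) ` {1..5 ^ (k - 1)}" using q by auto
    qed
    show "(\<lambda>q. 5 * q) ` {1..5 ^ (k - 1)} \<subseteq> M" unfolding M_def k5 by auto
  qed
  hence cM: "card M = 5 ^ (k - 1)" by (simp add: card_image inj_on_def)
  have "{1..5 ^ k} = J k \<union> M" unfolding J_def M_def by auto
  moreover have "J k \<inter> M = {}" unfolding J_def M_def by auto
  moreover have "card (J k \<union> M) = card (J k) + card M"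
    by (rule card_Un_disjoint) (use \<open>J k \<inter> M = {}\<close> in \<open>simp_all add: M_def\<close>)
  ultimately have "card {1..(5::nat) ^ k} = card (J k) + card M"
    by simp
  hence "5 ^ k = card (J k) + 5 ^ (k - 1)" using cM by simp
  thus ?thesis unfolding k5 by simp
qed

lemma Nk_Phi_shift:
  assumes k: "k \<ge> 1"
  shows "Nk k (P + Phi k * S) = Nk k P"
  unfolding Nk_J using ev_Phi_root[OF k] by (intro prod.cong) simp_all



lemma roots_zero:
  fixes P :: "complex poly"
  assumes k: "k \<ge> 1" and deg: "degree P < card (J k)"
    and roots: "\<forall>j\<in>J k. poly P (omega5 k ^ j) = 0"
  shows "P = 0"
proof (rule ccontr)
  assume P: "P \<noteq> 0"
  have sub: "(\<lambda>j. omega5 k ^ j) ` J k \<subseteq> {x. poly P x = 0}" using roots by auto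
  have inj: "inj_on (\<lambda>j. omega5 k ^ j) (J k)"
    by (rule inj_on_subset[OF omega_inj]) (auto simp: J_def)
  have "card (J k) = card ((\<lambda>j. omega5 k ^ j) ` J k)" using inj by (simp add: card_image)
  also have "\<dots> \<le> card {x. poly P x = 0}"
    by (rule card_mono[OF poly_roots_finite[OF P] sub])
  also have "\<dots> \<le> degree P" by (rule card_poly_roots_bound[OF P])
  finally show False using deg by simp
qed

lemma Phi_divmod:
  "\<exists>q r. F = Phi k * q + r \<and> (r = 0 \<or> degree r < degree (Phi k))"
proof -
  obtain q r where qr: "pseudo_divmod F (Phi k) = (q, r)" by (cases "pseudo_divmod F (Phi k)")
  have nz: "Phi k \<noteq> 0" using lead_coeff_Phi[of k] by auto
  from pseudo_divmod[OF nz qr] lead_coeff_Phi[of k] show ?thesis by auto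
qed

lemma integrality:
  assumes k: "k \<ge> 1" and m: "Nk k f = of_int m"
  shows "\<exists>q. poly f 1 ^ card (J k) = 5 * q + m"
proof -
  define F where "F = (\<Prod>j\<in>J k. pcompose f ([:0,1:] ^ j))"
  obtain q r where qr: "F = Phi k * q + r" and dr: "r = 0 \<or> degree r < degree (Phi k)"
    using Phi_divmod by blast
  have evF: "ev (omega5 k ^ a) F = of_int m" if a: "a \<in> J k" for a
  proof -
    have "ev (omega5 k ^ a) F = (\<Prod>j\<in>J k. ev (omega5 k ^ (a * j)) f)"
      unfolding F_def ev_prod by (simp add: power_mult)
    also have "\<dots> = Nk k f" unfolding Nk_J
      by (rule J_perm[OF k]) (use a in \<open>auto simp: J_def\<close>)
    finally show ?thesis using m by simp
  qed
  define P where "P = map_poly (of_int :: int \<Rightarrow> complex) r - [:of_int m:]"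
  have "P = 0"
  proof (rule roots_zero[OF k])
    have "degree P \<le> max (degree r) 0"
      unfolding P_def using degree_diff_le_max[of "map_poly (of_int :: int \<Rightarrow> complex) r" "[:of_int m:]"]
        map_poly_degree_leq[of "of_int :: int \<Rightarrow> complex" r] by simp
    moreover have "degree (Phi k) > 0" unfolding degree_Phi by simp
    ultimately show "degree P < card (J k)"
      using dr unfolding card_J[OF k] degree_Phi[symmetric] by auto
    show "\<forall>j\<in>J k. poly P (omega5 k ^ j) = 0"
    proof
      fix j assume j: "j \<in> J k"
      have "ev (omega5 k ^ j) r = of_int m"
        using evF[OF j] ev_Phi_root[OF k j] unfolding qr by simp
      thus "poly P (omega5 k ^ j) = 0" unfolding P_def ev_def by simp
    qed
  qed
  hence "ev 1 r = of_int m" unfolding P_def ev_def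
    by (metis eq_iff_diff_eq_0 poly_0 poly_diff poly_pCons mult_zero_right add.right_neutral)
  hence "ev 1 F = 5 * of_int (poly q 1) + of_int m" unfolding qr by (simp add: ev1_Phi ev_real poly1_Phi)
  moreover have "ev 1 F = of_int (poly f 1) ^ card (J k)" unfolding F_def ev_prod by (simp add: ev_real)
  ultimately have "of_int (poly f 1 ^ card (J k)) = (of_int (5 * poly q 1 + m) :: complex)" by simp
  hence "poly f 1 ^ card (J k) = 5 * poly q 1 + m" using of_int_eq_iff by blast
  thus ?thesis by blast
qed

lemma Phi_factor:
  assumes k: "k \<ge> 1"
  shows "map_poly of_int (Phi k) = (\<Prod>j\<in>J k. [:- (omega5 k ^ j), 1:])"
proof -
  define A where "A = map_poly (of_int :: int \<Rightarrow> complex) (Phi k)"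
  define B where "B = (\<Prod>j\<in>J k. [:- (omega5 k ^ j), 1:])"
  have dA: "degree A = card (J k)" unfolding A_def card_J[OF k] degree_Phi[symmetric]
    by (rule degree_map_poly) simp
  have lA: "coeff A (card (J k)) = 1" 
    using lead_coeff_Phi[of k] unfolding dA[symmetric] unfolding A_def
    by (simp add: coeff_map_poly degree_map_poly)
  have dB: "degree B = card (J k)" unfolding B_def by (subst degree_prod_sum_eq) auto
  have lB: "coeff B (card (J k)) = 1" unfolding dB[symmetric] B_def lead_coeff_prod by simp
  have "A - B = 0"
  proof (rule roots_zero[OF k])
    have c: "coeff (A - B) (card (J k)) = 0" using lA lB by simp
    have le: "degree (A - B) \<le> card (J k)" using degree_diff_le[of A _ B] dA dB by simp
    have "card (J k) > 0" unfolding card_J[OF k] by simp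
    thus "degree (A - B) < card (J k)"
      using c le by (metis le_neq_implies_less leading_coeff_0_iff degree_0)
    show "\<forall>j\<in>J k. poly (A - B) (omega5 k ^ j) = 0"
    proof
      fix j assume j: "j \<in> J k"
      have "poly A (omega5 k ^ j) = 0" using ev_Phi_root[OF k j] unfolding A_def ev_def .
      moreover have "poly B (omega5 k ^ j) = 0" unfolding B_def poly_prod
        using j by (intro prod_zero) auto
      ultimately show "poly (A - B) (omega5 k ^ j) = 0" by simp
    qed
  qed
  thus ?thesis unfolding A_def B_def by simp
qed

lemma Nk_1mX: assumes k: "k \<ge> 1" shows "Nk k [:1,-1:] = 5"
proof -
  have "Nk k [:1,-1:] = (\<Prod>j\<in>J k. 1 - omega5 k ^ j)" unfolding Nk_J by simp
  also have "\<dots> = poly (\<Prod>j\<in>J k. [:- (omega5 k ^ j), 1:]) 1" unfolding poly_prod by simp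
  also have "\<dots> = ev 1 (Phi k)" unfolding Phi_factor[OF k, symmetric] ev_def ..
  finally show ?thesis by (simp add: ev1_Phi)
qed



abbreviation tt :: "int poly" where "tt \<equiv> [:-1, 1:]"

lemma ring_five:
  fixes y s w :: "'a::comm_ring_1"
  assumes "s = y - 1" "w = 2* s + 2* s^2 + s^3"
  shows "5 = (1 + y + y^2 + y^3 + y^4) * (1 - w + w^2) + s^3 * (- s * (1 - w + w^2) - 5 * (2 + 2* s + s^2)^3)"
proof -
  have y: "y = s + 1" using assms(1) by simp
  show ?thesis unfolding y assms(2) by (simp add: algebra_simps power2_eq_square power3_eq_cube power4_eq_xxxx)
qed

lemma ring_mulT:
  fixes t a0 a1 a2 b0 b1 b2 :: "'a::comm_ring_1"
  shows "(a0 + a1*t + a2*t^2)*(b0 + b1*t + b2*t^2) - ((a0*b0) + (a0*b1+a1*b0)*t + (a0*b2+a1*b1+a2*b0)*t^2)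
     = t^3*((a1*b2+a2*b1) + (a2*b2)*t)"
  by (simp add: algebra_simps power2_eq_square power3_eq_cube power4_eq_xxxx)

lemma ring_taylor:
  fixes t a c0 c1 c2 A :: "'a::comm_ring_1"
  shows "a + (1 + t) * (c0 + c1 * t + c2 * t^2 + t^3 * A) = (a + c0) + (c0 + c1) * t + (c1 + c2) * t^2 + t^3 * (c2 + A + t * A)"
  by (simp add: algebra_simps power2_eq_square power3_eq_cube power4_eq_xxxx)

lemma ring_part2:
  fixes t h Phi :: "'a::comm_ring_1"
  assumes "Phi = 1 + (1+t) + (1+t)^2 + (1+t)^3 + (1+t)^4"
  shows "(- t) * (1 + t^3 * h) = (- t + 5 * ((1 + 2*t + 2*t^2 + t^3) * h)) + Phi * (- h)"
  unfolding assms by (simp add: algebra_simps power2_eq_square power3_eq_cube power4_eq_xxxx)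


lemma five_ideal: "\<exists>A5 B5. (5::int poly) = Phi k * A5 + tt ^ 3 * B5"
proof -
  define y where "y = [:0,1::int:] ^ (5 ^ (k - 1))"
  define s where "s = y - 1"
  have tt: "[:0,1::int:] - 1 = tt" by (simp add: one_pCons)
  obtain T where T: "s = tt * T"
    unfolding s_def y_def using power_diff_1_eq[of "[:0,1::int:]" "5 ^ (k - 1)"] unfolding tt by blast
  have Ph: "Phi k = 1 + y + y^2 + y^3 + y^4" unfolding Phi_alt y_def Let_def ..
  define w where "w = 2* s + 2* s^2 + s^3"
  have "(5::int poly) = Phi k * (1 - w + w^2) + s^3 * (- s * (1 - w + w^2) - 5 * (2 + 2* s + s^2)^3)"
    unfolding Ph by (rule ring_five[OF s_def w_def])
  hence "(5::int poly) = Phi k * (1 - w + w^2) + tt^3 * (T^3 * (- s * (1 - w + w^2) - 5 * (2 + 2* s + s^2)^3))"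
    unfolding T by (simp only: power_mult_distrib mult.assoc)
  thus ?thesis by blast
qed

definition Idl :: "nat \<Rightarrow> int poly \<Rightarrow> bool" where
  "Idl k D \<longleftrightarrow> (\<exists>A B S. D = tt ^ 3 * A + 5 * B + Phi k * S)"

definition cng :: "nat \<Rightarrow> int poly \<Rightarrow> int poly \<Rightarrow> bool" where
  "cng k P Q \<longleftrightarrow> Idl k (P - Q)"

lemma Id_0: "Idl k 0" unfolding Idl_def by (rule exI[of _ 0])+ simp

lemma Id_add: "Idl k D \<Longrightarrow> Idl k E \<Longrightarrow> Idl k (D + E)"
  unfolding Idl_def
proof (elim exE)
  fix A B S A' B' S'
  assume "D = tt ^ 3 * A + 5 * B + Phi k * S" "E = tt ^ 3 * A' + 5 * B' + Phi k * S'"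
  hence "D + E = tt ^ 3 * (A + A') + 5 * (B + B') + Phi k * (S + S')" by (simp add: algebra_simps)
  thus "\<exists>A B S. D + E = tt ^ 3 * A + 5 * B + Phi k * S" by blast
qed

lemma Id_mult: "Idl k D \<Longrightarrow> Idl k (D * E)"
  unfolding Idl_def
proof (elim exE)
  fix A B S
  assume "D = tt ^ 3 * A + 5 * B + Phi k * S"
  hence "D * E = tt ^ 3 * (A * E) + 5 * (B * E) + Phi k * (S * E)" by (simp add: algebra_simps)
  thus "\<exists>A B S. D * E = tt ^ 3 * A + 5 * B + Phi k * S" by blast
qed

lemma Id_uminus: "Idl k D \<Longrightarrow> Idl k (- D)"
  using Id_mult[of k D "-1"] by simp

lemma Id_t3: "Idl k (tt ^ 3 * A)"
  unfolding Idl_def by (rule exI[of _ A], rule exI[of _ 0], rule exI[of _ 0]) simp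

lemma Id_5: "Idl k (5 * B)"
  unfolding Idl_def by (rule exI[of _ 0], rule exI[of _ B], rule exI[of _ 0]) simp

lemma cng_refl: "cng k P P" unfolding cng_def by (simp add: Id_0)

lemma cng_eq: "P = Q \<Longrightarrow> cng k P Q" by (simp add: cng_refl)

lemma cng_trans: "cng k P Q \<Longrightarrow> cng k Q R \<Longrightarrow> cng k P R"
  unfolding cng_def using Id_add[of k "P - Q" "Q - R"] by simp

lemma cng_mult: "cng k P Q \<Longrightarrow> cng k P' Q' \<Longrightarrow> cng k (P * P') (Q * Q')"
proof -
  assume "cng k P Q" "cng k P' Q'"
  hence "Idl k ((P - Q) * P')" "Idl k ((P' - Q') * Q)" unfolding cng_def by (simp_all add: Id_mult)
  hence "Idl k ((P - Q) * P' + (P' - Q') * Q)" by (rule Id_add)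
  moreover have "(P - Q) * P' + (P' - Q') * Q = P * P' - Q * Q'" by (simp add: algebra_simps)
  ultimately show ?thesis unfolding cng_def by simp
qed

definition T :: "int \<Rightarrow> int \<Rightarrow> int \<Rightarrow> int poly" where
  "T a0 a1 a2 = of_int a0 + of_int a1 * tt + of_int a2 * tt ^ 2"

lemma mulT: "cng k (T a0 a1 a2 * T b0 b1 b2) (T (a0*b0) (a0*b1+a1*b0) (a0*b2+a1*b1+a2*b0))"
proof -
  have "T a0 a1 a2 * T b0 b1 b2 - T (a0*b0) (a0*b1+a1*b0) (a0*b2+a1*b1+a2*b0)
      = tt ^ 3 * (of_int (a1*b2+a2*b1) + of_int (a2*b2) * tt)"
    unfolding T_def of_int_mult of_int_add by (rule ring_mulT)
  thus ?thesis unfolding cng_def by (simp add: Id_t3)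
qed

lemma cng_mulT: "cng k P (T a0 a1 a2) \<Longrightarrow> cng k Q (T b0 b1 b2) \<Longrightarrow>
   cng k (P * Q) (T (a0*b0) (a0*b1+a1*b0) (a0*b2+a1*b1+a2*b0))"
  by (rule cng_trans[OF cng_mult mulT])

lemma modT:
  assumes "a0 mod 5 = b0 mod 5" "a1 mod 5 = b1 mod 5" "a2 mod 5 = b2 mod 5"
  shows "cng k (T a0 a1 a2) (T b0 b1 b2)"
proof -
  have "5 dvd a0 - b0" using assms(1) by (simp add: mod_eq_dvd_iff)
  then obtain c0 where "a0 - b0 = 5 * c0" by (auto simp: dvd_def)
  hence c0: "a0 = b0 + 5 * c0" by simp
  have "5 dvd a1 - b1" using assms(2) by (simp add: mod_eq_dvd_iff)
  then obtain c1 where "a1 - b1 = 5 * c1" by (auto simp: dvd_def)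
  hence c1: "a1 = b1 + 5 * c1" by simp
  have "5 dvd a2 - b2" using assms(3) by (simp add: mod_eq_dvd_iff)
  then obtain c2 where "a2 - b2 = 5 * c2" by (auto simp: dvd_def)
  hence c2: "a2 = b2 + 5 * c2" by simp
  have "T a0 a1 a2 - T b0 b1 b2 = 5 * T c0 c1 c2"
    unfolding T_def c0 c1 c2 of_int_add of_int_mult by (simp add: algebra_simps)
  thus ?thesis unfolding cng_def by (simp add: Id_5)
qed

lemma taylor: "\<exists>c1 c2 A. f = T (poly f 1) c1 c2 + tt ^ 3 * A"
proof (induction f)
  case 0
  show ?case by (rule exI[of _ 0], rule exI[of _ 0], rule exI[of _ 0]) (simp add: T_def)
next
  case (pCons a p)
  then obtain c1 c2 A where p: "p = T (poly p 1) c1 c2 + tt ^ 3 * A" by blast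
  have X: "pCons a p = of_int a + (1 + tt) * p"
  proof -
    have "pCons a p = [:a:] + pCons 0 p" by simp
    moreover have "pCons 0 p = [:0,1:] * p" by simp
    moreover have "[:0,1::int:] = 1 + tt" by (simp add: one_pCons)
    ultimately show ?thesis by (simp add: of_int_poly)
  qed
  have "pCons a p = T (poly (pCons a p) 1) (poly p 1 + c1) (c1 + c2) + tt ^ 3 * (of_int c2 + A + tt * A)"
    apply (subst X) apply (subst p) unfolding T_def of_int_add 
    apply (subst ring_taylor) by simp
  thus ?case by blast
qed



lemma smult5: "smult 5 (g::int poly) = 5 * g"
proof -
  have e: "(5::int poly) = [:5:]" using of_int_poly[of 5, where 'a=int] by simp
  have "5 * g = [:5:] * g" by (subst e) (rule refl)
  thus ?thesis by simp
qed

lemma X_T: "[:0,1:] = T 1 1 0" unfolding T_def of_int_poly by simp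
lemma X1_T: "[:1,1:] = T 2 1 0" unfolding T_def of_int_poly by simp
lemma one_T: "1 = T 1 0 0" unfolding T_def by simp

lemma powX: "\<exists>r. cng k ([:0,1:] ^ n) (T 1 (int n) r)"
proof (induction n)
  case 0
  show ?case by (rule exI[of _ 0])+ (simp add: one_T[symmetric] cng_refl)
next
  case (Suc n)
  then obtain r where r: "cng k ([:0,1:] ^ n) (T 1 (int n) r)" by blast
  have "cng k ([:0,1:] * [:0,1:] ^ n) (T (1*1) (1 * int n + 1 * 1) (1 * r + 1 * int n + 0 * 1))"
    by (rule cng_mulT[OF cng_eq[OF X_T] r])
  hence "cng k ([:0,1:] ^ Suc n) (T 1 (int (Suc n)) (r + int n))" by (simp add: add.commute)
  thus ?case by blast
qed

lemma pow1X: "\<exists>q r. cng k ([:1,1:] ^ n) (T (2 ^ n) q r)"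
proof (induction n)
  case 0
  show ?case by (rule exI[of _ 0])+ (simp add: one_T[symmetric] cng_refl)
next
  case (Suc n)
  then obtain q r where r: "cng k ([:1,1:] ^ n) (T (2 ^ n) q r)" by blast
  have "cng k ([:1,1:] * [:1,1:] ^ n) (T (2 * 2 ^ n) (2 * q + 1 * 2 ^ n) (2 * r + 1 * q + 0 * 2 ^ n))"
    by (rule cng_mulT[OF cng_eq[OF X1_T] r])
  thus ?case by auto
qed

definition W :: "int poly" where "W = [:1,1:] ^ 4 * [:0,1:] ^ 3"

lemma W_T: "cng k W (T 1 0 3)"
proof -
  have a2: "cng k ([:1,1:] * [:1,1:]) (T 4 4 1)"
    using cng_mulT[OF cng_eq[OF X1_T] cng_eq[OF X1_T], of k] by simp
  have a4: "cng k (([:1,1:] * [:1,1:]) * ([:1,1:] * [:1,1:])) (T 16 32 24)"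
    using cng_mulT[OF a2 a2] by simp
  have b2: "cng k ([:0,1:] * [:0,1:]) (T 1 2 1)"
    using cng_mulT[OF cng_eq[OF X_T] cng_eq[OF X_T], of k] by simp
  have b3: "cng k (([:0,1:] * [:0,1:]) * [:0,1:]) (T 1 3 3)"
    using cng_mulT[OF b2 cng_eq[OF X_T]] by simp
  have "cng k ((([:1,1:] * [:1,1:]) * ([:1,1:] * [:1,1:])) * (([:0,1:] * [:0,1:]) * [:0,1:])) (T 16 80 168)"
    using cng_mulT[OF a4 b3] by simp
  moreover have "(([:1,1:] * [:1,1:]) * ([:1,1:] * [:1,1:])) * (([:0,1:] * [:0,1:]) * [:0,1:]) = W"
    unfolding W_def by (simp only: power4_eq_xxxx power3_eq_cube mult.assoc)
  moreover have "cng k (T 16 80 168) (T 1 0 3)" by (rule modT) simp_all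
  ultimately show ?thesis using cng_trans by metis
qed

lemma powW: "cng k (W ^ n) (T 1 0 (3 * int n))"
proof (induction n)
  case 0
  show ?case by (simp add: one_T[symmetric] cng_refl)
next
  case (Suc n)
  have "cng k (W * W ^ n) (T (1*1) (1 * 0 + 0 * 1) (1 * (3 * int n) + 0 * 0 + 3 * 1))"
    by (rule cng_mulT[OF W_T Suc])
  thus ?case by (simp add: algebra_simps)
qed

lemma Nk_W: "k \<ge> 1 \<Longrightarrow> Nk k W = 1"
  unfolding W_def by (simp add: Nk_mult Nk_power Nk_X Nk_1X)

lemma two_pow_inv: "\<not> 5 dvd (c::int) \<Longrightarrow> \<exists>a::nat. (2 ^ a * c) mod 5 = 1"
proof -
  assume nd: "\<not> 5 dvd c"
  have "(2 ^ a * c) mod 5 = (2 ^ a * (c mod 5)) mod 5" for a :: nat by (simp add: mod_mult_right_eq)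
  moreover have "c mod 5 \<in> {1,2,3,4}"
  proof -
    have "c mod 5 \<noteq> 0" using nd by (simp add: dvd_eq_mod_eq_0)
    moreover have "0 \<le> c mod 5" "c mod 5 < 5" by simp_all
    ultimately show ?thesis by auto
  qed
  ultimately show ?thesis
  proof (elim insertE)
    assume h: "\<And>a. (2 ^ a * c) mod 5 = (2 ^ a * (c mod 5)) mod 5"
    { assume "c mod 5 = 1" thus ?thesis using h[of 0] by (intro exI[of _ 0]) simp }
    { assume "c mod 5 = 2" thus ?thesis using h[of 3] by (intro exI[of _ 3]) simp }
    { assume "c mod 5 = 3" thus ?thesis using h[of 1] by (intro exI[of _ 1]) simp }
    { assume "c mod 5 = 4" thus ?thesis using h[of 2] by (intro exI[of _ 2]) simp }
    { assume "c mod 5 \<in> {}" thus ?thesis by simp }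
  qed
qed



lemma part1:
  assumes k: "k \<ge> 1" and m5: "\<not> (5::int) dvd m" and fm: "of_int m = Nk k f"
  shows "\<exists>h :: int poly. of_int m = Nk k (1 + [:-1, 1:] ^ 3 * h)"
proof -
  define c0 where "c0 = poly f 1"
  obtain q where q: "c0 ^ card (J k) = 5 * q + m"
    using integrality[OF k fm[symmetric]] unfolding c0_def by blast
  have nd: "\<not> 5 dvd c0"
  proof
    assume "5 dvd c0"
    moreover have "card (J k) > 0" unfolding card_J[OF k] by simp
    ultimately obtain n' where "card (J k) = Suc n'" using gr0_conv_Suc by blast
    hence "c0 ^ card (J k) = c0 * c0 ^ n'" by simp
    hence "5 dvd c0 ^ card (J k)" using \<open>5 dvd c0\<close> by simp
    hence "5 dvd m" using q by (metis dvd_add_right_iff dvd_triv_left)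
    thus False using m5 by simp
  qed
  obtain c1 c2 A where fA: "f = T c0 c1 c2 + tt ^ 3 * A" using taylor[of f] unfolding c0_def by blast
  have cf: "cng k f (T c0 c1 c2)" unfolding cng_def using fA Id_t3 by simp
  obtain a where a: "(2 ^ a * c0) mod 5 = 1" using two_pow_inv[OF nd] by blast
  obtain qa ra where qa: "cng k ([:1,1:] ^ a) (T (2 ^ a) qa ra)" using pow1X by blast
  define d1 where "d1 = 2 ^ a * c1 + qa * c0"
  define d2 where "d2 = 2 ^ a * c2 + qa * c1 + ra * c0"
  have "cng k ([:1,1:] ^ a * f) (T (2 ^ a * c0) d1 d2)"
    unfolding d1_def d2_def by (rule cng_mulT[OF qa cf])
  moreover have "cng k (T (2 ^ a * c0) d1 d2) (T 1 d1 d2)" by (rule modT) (simp_all add: a)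
  ultimately have cA: "cng k ([:1,1:] ^ a * f) (T 1 d1 d2)" by (rule cng_trans)
  define b where "b = nat ((- d1) mod 5)"
  have bi: "int b = (- d1) mod 5" unfolding b_def by simp
  obtain rb where rb: "cng k ([:0,1:] ^ b) (T 1 (int b) rb)" using powX by blast
  define e where "e = 1 * d2 + int b * d1 + rb * 1"
  have "cng k ([:0,1:] ^ b * ([:1,1:] ^ a * f)) (T (1 * 1) (1 * d1 + int b * 1) e)"
    unfolding e_def by (rule cng_mulT[OF rb cA])
  moreover have "cng k (T (1 * 1) (1 * d1 + int b * 1) e) (T 1 0 e)"
  proof (rule modT)
    show "(1 * d1 + int b * 1) mod 5 = 0 mod 5" unfolding bi by (simp add: mod_add_right_eq)
  qed simp_all
  ultimately have cB: "cng k ([:0,1:] ^ b * ([:1,1:] ^ a * f)) (T 1 0 e)" by (rule cng_trans)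
  define c where "c = nat ((3 * e) mod 5)"
  have ci: "int c = (3 * e) mod 5" unfolding c_def by simp
  have "cng k (W ^ c * ([:0,1:] ^ b * ([:1,1:] ^ a * f))) (T (1 * 1) (1 * 0 + 0 * 1) (1 * e + 0 * 0 + 3 * int c * 1))"
    by (rule cng_mulT[OF powW cB])
  moreover have "cng k (T (1 * 1) (1 * 0 + 0 * 1) (1 * e + 0 * 0 + 3 * int c * 1)) (T 1 0 0)"
  proof (rule modT)
    have "(e + 3 * ((3 * e) mod 5)) mod 5 = (e + 3 * (3 * e)) mod 5"
      by (metis mod_add_right_eq mod_mult_right_eq)
    also have "\<dots> = (5 * (2 * e)) mod 5" by (simp add: algebra_simps)
    also have "\<dots> = 0" by simp
    finally show "(1 * e + 0 * 0 + 3 * int c * 1) mod 5 = 0 mod 5" unfolding ci by simp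
  qed simp_all
  ultimately have "cng k (W ^ c * ([:0,1:] ^ b * ([:1,1:] ^ a * f))) (T 1 0 0)"
    by (rule cng_trans)
  hence cC: "cng k (W ^ c * ([:0,1:] ^ b * ([:1,1:] ^ a * f))) 1"
    unfolding one_T[symmetric] .
  define P where "P = W ^ c * ([:0,1:] ^ b * ([:1,1:] ^ a * f))"
  obtain A' B' S' where ABS: "P - 1 = tt ^ 3 * A' + 5 * B' + Phi k * S'"
    using cC unfolding P_def[symmetric] cng_def Idl_def by blast
  obtain A5 B5 where five: "(5::int poly) = Phi k * A5 + tt ^ 3 * B5" using five_ideal by blast
  define h where "h = A' + B5 * B'"
  have "1 + tt ^ 3 * h = P + Phi k * (- (S' + A5 * B'))"
  proof -
    have P1: "P = tt ^ 3 * A' + 5 * B' + Phi k * S' + 1" using ABS by (simp add: diff_eq_eq)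
    have "P = tt ^ 3 * A' + (Phi k * A5 + tt ^ 3 * B5) * B' + Phi k * S' + 1"
      using P1 by (subst (asm) five)
    thus ?thesis unfolding h_def by (simp add: algebra_simps)
  qed
  hence "Nk k (1 + tt ^ 3 * h) = Nk k P" using Nk_Phi_shift[OF k, of P "- (S' + A5 * B')"] by simp
  also have "\<dots> = Nk k f"
    unfolding P_def by (simp add: Nk_mult Nk_power Nk_W[OF k] Nk_X[OF k] Nk_1X[OF k])
  finally have "Nk k (1 + tt ^ 3 * h) = Nk k f" .
  hence "of_int m = Nk k (1 + tt ^ 3 * h)" using fm by simp
  thus ?thesis by blast
qed

lemma part2:
  assumes hm: "of_int m = Nk 1 (1 + [:-1, 1:] ^ 3 * h)"
  shows "\<exists>g :: int poly. of_int (5 * m) = Nk 1 ([:1, -1:] + smult 5 g)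
                 \<and> (\<not> (5::int) dvd poly h 1 \<longrightarrow> \<not> (5::int) dvd poly g 1)"
proof -
  define g where "g = (1 + 2 * tt + 2 * tt ^ 2 + tt ^ 3) * h"
  have Ph: "Phi 1 = 1 + (1 + tt) + (1 + tt)^2 + (1 + tt)^3 + (1 + tt)^4"
  proof -
    have e: "[:0,1::int:] ^ (5 ^ (1 - 1)) = 1 + tt" by (simp add: one_pCons)
    show ?thesis unfolding Phi_alt Let_def e ..
  qed
  have eq: "(- tt) * (1 + tt ^ 3 * h) = (- tt + 5 * g) + Phi 1 * (- h)"
    unfolding g_def by (rule ring_part2[OF Ph])
  have m1: "[:1, -1:] = - tt" by simp
  have "Nk 1 ([:1, -1:] + smult 5 g) = Nk 1 (- tt + 5 * g)"
    unfolding m1 smult5 ..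
  also have "\<dots> = Nk 1 ((- tt + 5 * g) + Phi 1 * (- h))"
    by (rule Nk_Phi_shift[symmetric]) simp
  also have "\<dots> = Nk 1 (- tt) * Nk 1 (1 + tt ^ 3 * h)" unfolding eq[symmetric] Nk_mult ..
  finally have A: "Nk 1 ([:1, -1:] + smult 5 g) = Nk 1 (- tt) * Nk 1 (1 + tt ^ 3 * h)" .
  have "Nk 1 (- tt) = Nk 1 [:1, -1:]" unfolding m1 ..
  hence "Nk 1 (- tt) = 5" using Nk_1mX[of 1] by simp
  hence "Nk 1 ([:1, -1:] + smult 5 g) = of_int (5 * m)" using A hm by simp
  moreover have "poly g 1 = poly h 1" unfolding g_def by simp
  ultimately show ?thesis by (intro exI[of _ g]) simp
qed

theorem lemma3p2:
  fixes i :: nat and m :: int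
  assumes "i \<ge> 1"
    and "\<not> (5::int) dvd m"
    and "\<exists>f :: int poly. of_int m = Nk i f"
  shows "(\<exists>h :: int poly. of_int m = Nk i (1 + [:-1, 1:] ^ 3 * h))
       \<and> (i = 1 \<longrightarrow>
           (\<forall>h :: int poly. of_int m = Nk 1 (1 + [:-1, 1:] ^ 3 * h) \<longrightarrow>
              (\<exists>g :: int poly. of_int (5 * m) = Nk 1 ([:1, -1:] + smult 5 g)
                 \<and> (\<not> (5::int) dvd poly h 1 \<longrightarrow> \<not> (5::int) dvd poly g 1))))"
  using part1[OF assms(1,2)] assms(3) part2 by blast

end
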